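(* Let $\mathsf x\in\mathbb R^m$ be an $s$-analytic random vector and let $f\colon\mathbb R^m\to\mathbb R^k$, with $m\le k$, be a real analytic immersion (i.e., $Jf(\mathbf v)>0$ for all $\mathbf v\in\mathbb R^m$). Then $f(\mathsf x)$ is $s$-analytic.
   Context: For differentiable $h\colon\mathbb R^k\to\mathbb R^l$ with differential $Dh(\mathbf v)\in\mathbb R^{l\times k}$, $Jh(\mathbf v)=\sqrt{\det(Dh(\mathbf v)^TDh(\mathbf v))}$ if $l\ge k$ and $\sqrt{\det(Dh(\mathbf v)Dh(\mathbf v)^T)}$ otherwise. A Borel measure $\mu$ on $\mathbb R^m$ is $s$-analytic ($s\in\{1,\dots,m\}$) if for every Borel $\mathcal U\subseteq\mathbb R^m$ with $\mu(\mathcal U)>0$ there exist a Borel set $\mathcal A\subseteq\mathbb R^s$ with $\lambda^s(\mathcal A)>0$ and a real analytic $h\colon\mathbb R^s\to\mathbb R^m$ with $Jh$ not identically zero such that $h(\mathcal A)\subseteq\mathcal U$. A random vector is $s$-analytic if its distribution is $s$-analytic. *)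

theory Defs
  imports "HOL-Analysis.Analysis" "HOL-Probability.Probability"
begin

definition real_analytic :: "(real^'a \<Rightarrow> real^'b) \<Rightarrow> bool" where
  "real_analytic h \<longleftrightarrow>
     (\<forall>a. \<exists>r>0. \<exists>c :: ('a \<Rightarrow> nat) \<Rightarrow> real^'b.
        \<forall>x\<in>ball a r. ((\<lambda>\<alpha>. (\<Prod>i\<in>UNIV. (x$i - a$i) ^ \<alpha> i) *\<^sub>R c \<alpha>) has_sum h x) UNIV)"

text \<open>Differential Dh(v) as an l x k matrix (rows indexed by the target coordinates).\<close>
definition Dmat :: "(real^'a \<Rightarrow> real^'b) \<Rightarrow> real^'a \<Rightarrow> real^'a^'b" where
  "Dmat h v = matrix (frechet_derivative h (at v))"

definition Jac :: "(real^'a \<Rightarrow> real^'b) \<Rightarrow> real^'a \<Rightarrow> real" where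
  "Jac h v = (if CARD('b) \<ge> CARD('a)
              then sqrt (det (transpose (Dmat h v) ** Dmat h v))
              else sqrt (det (Dmat h v ** transpose (Dmat h v))))"

text \<open>A Borel measure mu on real^'m is s-analytic, where s = CARD('s) in {1..m}.\<close>
definition s_analytic :: "'s::finite itself \<Rightarrow> (real^'m) measure \<Rightarrow> bool" where
  "s_analytic _ \<mu> \<longleftrightarrow> CARD('s) \<le> CARD('m) \<and>
     (\<forall>U \<in> sets borel. emeasure \<mu> U > 0 \<longrightarrow>
        (\<exists>(A :: (real^'s) set) (h :: real^'s \<Rightarrow> real^'m).
            A \<in> sets borel \<and> emeasure lborel A > 0 \<and>
            real_analytic h \<and> (\<exists>v. Jac h v \<noteq> 0) \<and> h ` A \<subseteq> U))"

end

theory Submission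
  imports Defs
begin

definition mon :: "real^'a \<Rightarrow> ('a \<Rightarrow> nat) \<Rightarrow> real" where
  "mon u \<alpha> = (\<Prod>i\<in>UNIV. (u$i) ^ \<alpha> i)"
definition deg :: "('a::finite \<Rightarrow> nat) \<Rightarrow> nat" where
  "deg \<alpha> = (\<Sum>i\<in>UNIV. \<alpha> i)"
definition unitidx :: "'a \<Rightarrow> 'a \<Rightarrow> nat" where
  "unitidx i = (\<lambda>j. if j = i then 1 else 0)"

lemma mon_const: "mon (\<chi> i. t) \<alpha> = t ^ deg \<alpha>"
  by (simp add: mon_def deg_def power_sum)

lemma abs_mon_le: "\<bar>mon u \<alpha>\<bar> \<le> norm u ^ deg \<alpha>"
  unfolding mon_def deg_def power_sum abs_prod
  by (intro prod_mono) (auto simp: power_abs intro: power_mono component_le_norm_cart)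

lemma mon_Z[simp]: "mon u (\<lambda>_. 0) = 1"
  by (simp add: mon_def)

lemma mon_zero: "\<alpha> \<noteq> (\<lambda>_. 0) \<Longrightarrow> mon 0 \<alpha> = 0"
proof -
  assume "\<alpha> \<noteq> (\<lambda>_. 0)"
  then obtain i where "\<alpha> i \<noteq> 0" by auto
  then show ?thesis unfolding mon_def by (intro prod_zero) auto
qed

lemma mon_unit[simp]: "mon u (unitidx i) = u $ i"
proof -
  have "mon u (unitidx i) = (\<Prod>j\<in>UNIV. if j = i then u$j else 1)"
    unfolding mon_def unitidx_def by (intro prod.cong) auto
  also have "\<dots> = u$i" by (simp add: prod.delta)
  finally show ?thesis .
qed

lemma deg_le1:
  fixes \<alpha> :: "'a::finite \<Rightarrow> nat"
  assumes "deg \<alpha> \<le> 1"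
  shows "\<alpha> = (\<lambda>_. 0) \<or> (\<exists>i. \<alpha> = unitidx i)"
proof (cases "\<alpha> = (\<lambda>_. 0)")
  case False
  then obtain i where i: "\<alpha> i \<noteq> 0" by auto
  have s: "deg \<alpha> = \<alpha> i + (\<Sum>j\<in>UNIV-{i}. \<alpha> j)"
    unfolding deg_def by (simp add: sum.remove)
  have h1: "\<alpha> i + (\<Sum>j\<in>UNIV-{i}. \<alpha> j) \<le> 1" using s assms by linarith
  then have "\<alpha> i = 1" "(\<Sum>j\<in>UNIV-{i}. \<alpha> j) = 0" using i by linarith+
  then have "\<alpha> i = 1" "\<forall>j\<in>UNIV-{i}. \<alpha> j = 0" by (simp_all add: sum_eq_0_iff)
  then have "\<alpha> = unitidx i" unfolding unitidx_def by (auto simp: fun_eq_iff)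
  then show ?thesis by auto
qed simp

lemma mon_bound:
  assumes "norm u \<le> t" "0 < t" "n \<le> deg \<alpha>"
  shows "\<bar>mon u \<alpha>\<bar> \<le> (norm u / t) ^ n * t ^ deg \<alpha>"
proof -
  have q: "0 \<le> norm u / t" "norm u / t \<le> 1" using assms by auto
  have "\<bar>mon u \<alpha>\<bar> \<le> norm u ^ deg \<alpha>" by (rule abs_mon_le)
  also have "\<dots> = (norm u / t) ^ deg \<alpha> * t ^ deg \<alpha>"
    using assms by (simp add: power_divide)
  also have "\<dots> \<le> (norm u / t) ^ n * t ^ deg \<alpha>"
    using q assms by (intro mult_right_mono power_decreasing) auto
  finally show ?thesis .
qed

lemma summable_on_finsum:
  fixes f :: "'i \<Rightarrow> 'x \<Rightarrow> real"
  assumes "finite I" "\<And>i. i \<in> I \<Longrightarrow> f i summable_on A"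
  shows "(\<lambda>x. \<Sum>i\<in>I. f i x) summable_on A"
  using assms by (induction I rule: finite_induct) (auto intro: summable_on_add)

lemma vec_norm_summable:
  fixes g :: "'x \<Rightarrow> real^'n"
  assumes "g summable_on A"
  shows "(\<lambda>x. norm (g x)) summable_on A"
proof -
  have c: "(\<lambda>x. \<bar>g x $ i\<bar>) summable_on A" for i
  proof -
    have "(\<lambda>x. g x $ i) summable_on A"
      using summable_on_bounded_linear[OF bounded_linear_vec_nth assms] .
    then show ?thesis using summable_on_iff_abs_summable_on_real by force
  qed
  have "(\<lambda>x. \<Sum>i\<in>UNIV. \<bar>g x $ i\<bar>) summable_on A"
    by (rule summable_on_finsum) (auto intro: c)
  then show ?thesis
    by (rule summable_on_comparison_test) (auto simp: norm_le_l1_cart)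
qed

lemma sum_bound_nonneg:
  fixes g f :: "'x \<Rightarrow> real"
  assumes "(f has_sum S) UNIV" "\<And>x. x\<in>B \<Longrightarrow> 0 \<le> g x" "\<And>x. x\<in>B \<Longrightarrow> g x \<le> q * f x"
    "\<And>x. 0 \<le> f x" "0 \<le> q"
  shows "g summable_on B" "infsum g B \<le> q * S"
proof -
  have qf: "((\<lambda>x. q * f x) has_sum q * S) UNIV" using has_sum_cmult_right[OF assms(1)] .
  then have qfB: "(\<lambda>x. q * f x) summable_on B"
    using summable_on_subset_banach has_sum_imp_summable by blast
  show g: "g summable_on B" by (rule summable_on_comparison_test[OF qfB]) (use assms in auto)
  have "infsum g B \<le> infsum (\<lambda>x. q * f x) UNIV"
    by (rule infsum_mono_neutral[OF g]) (use qf has_sum_imp_summable assms in auto)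
  also have "\<dots> = q * S" using qf by (simp add: infsumI)
  finally show "infsum g B \<le> q * S" .
qed

lemma analytic_at:
  fixes h :: "real^'a \<Rightarrow> real^'b"
  assumes "real_analytic h"
  obtains r c t S where "0 < r" "0 < t" "t < r" "real CARD('a) * t < r"
    "\<And>u. norm u < r \<Longrightarrow> ((\<lambda>\<alpha>. mon u \<alpha> *\<^sub>R c \<alpha>) has_sum h (a + u)) UNIV"
    "((\<lambda>\<alpha>. t ^ deg \<alpha> * norm (c \<alpha>)) has_sum S) UNIV"
proof -
  obtain r c where r: "r > 0" and c: "\<forall>x\<in>ball a r.
      ((\<lambda>\<alpha>. (\<Prod>i\<in>UNIV. (x$i - a$i) ^ \<alpha> i) *\<^sub>R c \<alpha>) has_sum h x) UNIV"
    using assms unfolding real_analytic_def by blast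
  have cu: "((\<lambda>\<alpha>. mon u \<alpha> *\<^sub>R c \<alpha>) has_sum h (a + u)) UNIV" if "norm u < r" for u
  proof -
    have "a + u \<in> ball a r" using that by (simp add: dist_norm)
    from c[rule_format, OF this] show ?thesis by (simp add: mon_def)
  qed
  define t where "t = r / (2 * real CARD('a))"
  have cpos: "real CARD('a) > 0" by simp
  have t: "0 < t" "real CARD('a) * t < r" using r cpos by (auto simp: t_def)
  have "1 \<le> real CARD('a)" by (simp add: Suc_le_eq)
  then have "t \<le> real CARD('a) * t" using t by (simp add: mult_le_cancel_right1)
  then have tr: "t < r" using t by linarith
  have n: "norm (\<chi> i::'a. t) < r"
  proof -
    have "norm (\<chi> i::'a. t) \<le> (\<Sum>i\<in>UNIV. \<bar>(\<chi> i::'a. t) $ i\<bar>)" by (rule norm_le_l1_cart)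
    also have "\<dots> = real CARD('a) * t" using t by simp
    finally show ?thesis using t by linarith
  qed
  have "(\<lambda>\<alpha>. norm (mon (\<chi> i::'a. t) \<alpha> *\<^sub>R c \<alpha>)) summable_on UNIV"
    using cu[OF n] by (intro vec_norm_summable) (auto intro: has_sum_imp_summable)
  moreover have "(\<lambda>\<alpha>. norm (mon (\<chi> i::'a. t) \<alpha> *\<^sub>R c \<alpha>)) = (\<lambda>\<alpha>. t ^ deg \<alpha> * norm (c \<alpha>))"
    using t by (simp only: mon_const norm_scaleR abs_of_pos zero_less_power)
  ultimately have "(\<lambda>\<alpha>. t ^ deg \<alpha> * norm (c \<alpha>)) summable_on UNIV" by simp
  then show ?thesis using that[OF r t(1) tr t(2) cu] by (auto simp: summable_iff_has_sum_infsum)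
qed

lemma norm_scaleR_mon: "norm (mon u \<alpha> *\<^sub>R v) = \<bar>mon u \<alpha>\<bar> * norm v" by simp

lemma analytic_deriv:
  fixes h :: "real^'a \<Rightarrow> real^'b"
  assumes exp: "\<And>u. norm u < r \<Longrightarrow> ((\<lambda>\<alpha>. mon u \<alpha> *\<^sub>R c \<alpha>) has_sum h (a + u)) UNIV"
    and S: "((\<lambda>\<alpha>. t ^ deg \<alpha> * norm (c \<alpha>)) has_sum S) UNIV" and t: "0 < t" "t < r"
  shows "(h has_derivative (\<lambda>u. \<Sum>i\<in>UNIV. u$i *\<^sub>R c (unitidx i))) (at a)"
proof -
  define Z :: "'a \<Rightarrow> nat" where "Z = (\<lambda>_. 0)"
  define F where "F = insert Z (range unitidx)"
  define L where "L = (\<lambda>u::real^'a. \<Sum>i\<in>UNIV. u$i *\<^sub>R c (unitidx i))"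
  have finF: "finite F" by (simp add: F_def)
  have ZU: "Z \<notin> range unitidx"
  proof
    assume "Z \<in> range unitidx"
    then obtain i where "Z = unitidx i" by auto
    then have "Z i = unitidx i i" by simp
    then show False by (simp add: Z_def unitidx_def)
  qed
  have inj: "inj unitidx" by (auto simp: inj_def unitidx_def fun_eq_iff split: if_splits)
  have sumF: "(\<Sum>\<alpha>\<in>F. mon u \<alpha> *\<^sub>R c \<alpha>) = c Z + L u" for u
  proof -
    have "(\<Sum>\<alpha>\<in>range unitidx. mon u \<alpha> *\<^sub>R c \<alpha>) = L u"
      unfolding L_def by (simp add: sum.reindex[OF inj] o_def)
    then show ?thesis using ZU by (simp add: F_def Z_def)
  qed
  have notF: "2 \<le> deg \<alpha>" if "\<alpha> \<notin> F" for \<alpha>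
    using deg_le1[of \<alpha>] that by (force simp: F_def Z_def)
  have S0: "0 \<le> S" using S by (rule has_sum_nonneg) (use t in auto)
  have ha: "h a = c Z"
  proof -
    have "((\<lambda>\<alpha>. mon 0 \<alpha> *\<^sub>R c \<alpha>) has_sum h a) UNIV" using exp[of 0] t by simp
    moreover have "((\<lambda>\<alpha>. mon 0 \<alpha> *\<^sub>R c \<alpha>) has_sum c Z) UNIV"
      by (rule has_sum_finite_neutralI[of "{Z}"]) (auto simp: mon_zero Z_def)
    ultimately show ?thesis using has_sum_unique by blast
  qed
  have rem: "norm (h (a + u) - h a - L u) \<le> (norm u / t)^2 * S" if u: "norm u \<le> t" for u
  proof -
    have hs: "((\<lambda>\<alpha>. mon u \<alpha> *\<^sub>R c \<alpha>) has_sum h (a + u)) UNIV" using exp u t by simp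
    have "((\<lambda>\<alpha>. mon u \<alpha> *\<^sub>R c \<alpha>) has_sum (h (a + u) - (c Z + L u))) (UNIV - F)"
      using has_sum_Diff[OF hs has_sum_finite[OF finF]] by (simp add: sumF)
    moreover
    have b: "(\<lambda>\<alpha>. \<bar>mon u \<alpha>\<bar> * norm (c \<alpha>)) summable_on (UNIV - F)"
         "infsum (\<lambda>\<alpha>. \<bar>mon u \<alpha>\<bar> * norm (c \<alpha>)) (UNIV - F) \<le> (norm u / t)^2 * S"
    proof -
      have pw: "\<bar>mon u \<alpha>\<bar> * norm (c \<alpha>) \<le> (norm u / t)^2 * (t ^ deg \<alpha> * norm (c \<alpha>))"
        if "\<alpha> \<in> UNIV - F" for \<alpha>
        using mult_right_mono[OF mon_bound[OF u t(1) notF], of \<alpha> "norm (c \<alpha>)"] that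
        by (simp add: mult.assoc)
      show "(\<lambda>\<alpha>. \<bar>mon u \<alpha>\<bar> * norm (c \<alpha>)) summable_on (UNIV - F)"
        by (rule sum_bound_nonneg[OF S, where q = "(norm u / t)^2"]) (use pw t in auto)
      show "infsum (\<lambda>\<alpha>. \<bar>mon u \<alpha>\<bar> * norm (c \<alpha>)) (UNIV - F) \<le> (norm u / t)^2 * S"
        by (rule sum_bound_nonneg[OF S, where q = "(norm u / t)^2"]) (use pw t in auto)
    qed
    ultimately have "norm (h (a + u) - (c Z + L u)) \<le> infsum (\<lambda>\<alpha>. \<bar>mon u \<alpha>\<bar> * norm (c \<alpha>)) (UNIV - F)"
      by (intro norm_has_sum_bound[where f="\<lambda>\<alpha>. mon u \<alpha> *\<^sub>R c \<alpha>"]) (auto simp: summable_iff_has_sum_infsum)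
    with b(2) show ?thesis by (simp add: ha algebra_simps)
  qed
  have lin: "linear L" unfolding L_def
    by (intro linearI) (auto simp: scaleR_add_left sum.distrib scaleR_sum_right)
  have "(h has_derivative L) (at a)"
    unfolding has_derivative_at
  proof
    show "bounded_linear L" using lin by (simp add: linear_conv_bounded_linear)
    show "(\<lambda>k. norm (h (a + k) - h a - L k) / norm k) \<midarrow>0\<rightarrow> 0"
    proof (rule Lim_null_comparison)
      show "\<forall>\<^sub>F k in at 0. norm (norm (h (a + k) - h a - L k) / norm k) \<le> norm k * (S / t^2)"
      proof -
        have "\<forall>\<^sub>F k in at (0::real^'a). norm k < t"
          using eventually_at_ball[OF t(1), of "0::real^'a" UNIV] by (auto elim!: eventually_mono simp: dist_norm)
        then show ?thesis
        proof (rule eventually_mono)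
          fix k :: "real^'a" assume k: "norm k < t"
          show "norm (norm (h (a + k) - h a - L k) / norm k) \<le> norm k * (S / t^2)"
          proof (cases "k = 0")
            case True then show ?thesis by simp
          next
            case False
            then have nk: "norm k > 0" by simp
            have "norm (h (a + k) - h a - L k) / norm k \<le> (norm k / t)^2 * S / norm k"
              using rem[of k] k nk by (intro divide_right_mono) auto
            also have "\<dots> = norm k * (S / t^2)" using nk by (simp add: power2_eq_square field_simps)
            finally show ?thesis by simp
          qed
        qed
      qed
      show "((\<lambda>k::real^'a. norm k * (S / t^2)) \<longlongrightarrow> 0) (at 0)"
        by (rule tendsto_mult_left_zero) (auto intro: tendsto_norm_zero tendsto_ident_at)
    qed
  qed
  then show ?thesis by (simp add: L_def)
qed


lemma prod_PiE_nonneg: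
  fixes g :: "'i \<Rightarrow> 'x \<Rightarrow> real"
  assumes "finite A" "\<And>x. x \<in> A \<Longrightarrow> (g x has_sum s x) (B x)"
    "\<And>x y. x \<in> A \<Longrightarrow> y \<in> B x \<Longrightarrow> 0 \<le> g x y"
  shows "((\<lambda>\<phi>. \<Prod>x\<in>A. g x (\<phi> x)) has_sum (\<Prod>x\<in>A. s x)) (PiE A B)"
  using assms
proof (induction A rule: finite_induct)
  case empty
  show ?case by (simp add: PiE_empty_domain has_sum_finite_iff)
next
  case (insert x A)
  have pi: "PiE (insert x A) B = (\<lambda>(\<phi>,y). \<phi>(x:=y)) ` (PiE A B \<times> B x)"
    unfolding PiE_insert_eq
    by (subst swap_product [symmetric]) (simp add: image_image case_prod_unfold)
  have inj: "inj_on (\<lambda>(\<phi>, y). \<phi>(x := y)) (PiE A B \<times> B x)"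
    using \<open>x \<notin> A\<close> by (rule inj_combinator')
  have IH: "((\<lambda>\<phi>. \<Prod>x\<in>A. g x (\<phi> x)) has_sum (\<Prod>x\<in>A. s x)) (PiE A B)"
    using insert by auto
  have gx: "(g x has_sum s x) (B x)" using insert by auto
  have prod: "(\<Prod>x'\<in>insert x A. g x' ((\<phi>(x:=y)) x')) = g x y * (\<Prod>x'\<in>A. g x' (\<phi> x'))" for \<phi> y
  proof -
    have "(\<Prod>x'\<in>A. g x' ((\<phi>(x:=y)) x')) = (\<Prod>x'\<in>A. g x' (\<phi> x'))"
      by (rule prod.cong) (use insert.hyps in auto)
    then show ?thesis using insert.hyps by simp
  qed
  define G where "G = (\<lambda>p::('i\<Rightarrow>'x)\<times>'x. g x (snd p) * (\<Prod>x'\<in>A. g x' (fst p x')))"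
  have fib: "((\<lambda>y. G (\<phi>, y)) has_sum (\<Prod>x'\<in>A. g x' (\<phi> x')) * s x) (B x)" if "\<phi> \<in> PiE A B" for \<phi>
    unfolding G_def using has_sum_cmult_left[OF gx, of "\<Prod>x'\<in>A. g x' (\<phi> x')"] by (simp add: mult.commute)
  have out: "((\<lambda>\<phi>. (\<Prod>x'\<in>A. g x' (\<phi> x')) * s x) has_sum (\<Prod>x\<in>A. s x) * s x) (PiE A B)"
    by (rule has_sum_cmult_left[OF IH])
  have nn: "0 \<le> G (\<phi>, y)" if "\<phi> \<in> PiE A B" "y \<in> B x" for \<phi> y
    unfolding G_def using that insert.prems(2) by (auto intro!: mult_nonneg_nonneg prod_nonneg)
  have "G summable_on Sigma (PiE A B) (\<lambda>_. B x)"
    by (rule summable_on_SigmaI[OF fib has_sum_imp_summable[OF out] nn])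
  then have "(G has_sum (\<Prod>x\<in>A. s x) * s x) (PiE A B \<times> B x)"
    using has_sum_SigmaI[OF fib out] by simp
  moreover have "G = (\<lambda>\<phi>. \<Prod>x\<in>insert x A. g x (\<phi> x)) \<circ> (\<lambda>(\<phi>, y). \<phi>(x := y))"
  proof (rule ext, clarify)
    fix \<phi> y
    show "G (\<phi>, y) = ((\<lambda>\<phi>. \<Prod>x\<in>insert x A. g x (\<phi> x)) \<circ> (\<lambda>(\<phi>, y). \<phi>(x := y))) (\<phi>, y)"
      by (simp only: G_def o_def case_prod_conv fst_conv snd_conv prod)
  qed
  ultimately have "((\<lambda>\<phi>. \<Prod>x\<in>insert x A. g x (\<phi> x)) has_sum (\<Prod>x\<in>A. s x) * s x) (PiE (insert x A) B)"
    unfolding pi using has_sum_reindex[OF inj, of "\<lambda>\<phi>. \<Prod>x\<in>insert x A. g x (\<phi> x)"] by simp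
  then show ?case using insert.hyps by (simp add: mult.commute)
qed

lemma prod_PiE_abs:
  fixes f :: "'i \<Rightarrow> 'x \<Rightarrow> real"
  assumes "finite A" "\<And>x. x \<in> A \<Longrightarrow> (f x has_sum s x) (B x)"
    "\<And>x. x \<in> A \<Longrightarrow> ((\<lambda>y. \<bar>f x y\<bar>) has_sum m x) (B x)"
  shows "((\<lambda>\<phi>. \<Prod>x\<in>A. f x (\<phi> x)) has_sum (\<Prod>x\<in>A. s x)) (PiE A B)"
    "((\<lambda>\<phi>. \<bar>\<Prod>x\<in>A. f x (\<phi> x)\<bar>) has_sum (\<Prod>x\<in>A. m x)) (PiE A B)"
proof -
  show n: "((\<lambda>\<phi>. \<bar>\<Prod>x\<in>A. f x (\<phi> x)\<bar>) has_sum (\<Prod>x\<in>A. m x)) (PiE A B)"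
    using prod_PiE_nonneg[where g="\<lambda>x y. \<bar>f x y\<bar>", OF assms(1,3)] by (simp add: abs_prod)
  have n': "((\<lambda>\<phi>. norm (\<Prod>x\<in>A. f x (\<phi> x))) has_sum (\<Prod>x\<in>A. m x)) (PiE A B)"
    using n unfolding real_norm_def .
  have "(\<lambda>\<phi>. \<Prod>x\<in>A. f x (\<phi> x)) summable_on (PiE A B)"
    by (rule abs_summable_summable[OF has_sum_imp_summable[OF n']])
  moreover have "infsum (\<lambda>\<phi>. \<Prod>x\<in>A. f x (\<phi> x)) (PiE A B) = (\<Prod>x\<in>A. infsum (f x) (B x))"
  proof (rule infsum_prod_PiE_abs[OF assms(1)])
    fix x assume "x \<in> A"
    show "(\<lambda>y. norm (f x y)) summable_on B x"
      unfolding real_norm_def by (rule has_sum_imp_summable[OF assms(3)[OF \<open>x \<in> A\<close>]])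
  qed
  moreover have "(\<Prod>x\<in>A. infsum (f x) (B x)) = (\<Prod>x\<in>A. s x)"
    by (rule prod.cong[OF refl], rule infsumI, rule assms(2))
  ultimately show "((\<lambda>\<phi>. \<Prod>x\<in>A. f x (\<phi> x)) has_sum (\<Prod>x\<in>A. s x)) (PiE A B)"
    by (simp add: summable_iff_has_sum_infsum)
qed


lemma mon_prod: "finite K \<Longrightarrow> (\<Prod>k\<in>K. mon u (\<tau> k)) = mon u (\<lambda>i. \<Sum>k\<in>K. \<tau> k i)"
  unfolding mon_def power_sum by (rule prod.swap)

definition Dset :: "('m::finite \<Rightarrow> nat) \<Rightarrow> ('m \<times> nat) set" where
  "Dset \<beta> = (SIGMA j:UNIV. {..<\<beta> j})"

lemma finite_Dset[simp]: "finite (Dset \<beta>)"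
  by (simp add: Dset_def)

lemma prod_Dset: "(\<Prod>jk\<in>Dset \<beta>. g (fst jk)) = (\<Prod>j\<in>UNIV. (g j :: real) ^ \<beta> j)"
proof -
  have "(\<Prod>jk\<in>Dset \<beta>. g (fst jk)) = (\<Prod>j\<in>UNIV. \<Prod>k\<in>{..<\<beta> j}. g j)"
    unfolding Dset_def by (subst prod.Sigma) (auto simp: case_prod_unfold)
  also have "\<dots> = (\<Prod>j\<in>UNIV. g j ^ \<beta> j)" by simp
  finally show ?thesis .
qed

lemma deg_pos:
  assumes "\<alpha> \<noteq> (\<lambda>_. 0)" shows "1 \<le> deg \<alpha>"
proof (rule ccontr)
  assume "\<not> 1 \<le> deg \<alpha>"
  then have "deg \<alpha> = 0" by simp
  then have "\<forall>i. \<alpha> i = 0" unfolding deg_def by simp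
  then show False using assms by auto
qed

lemma inner_bounds:
  fixes h :: "real^'s \<Rightarrow> real^'m" and c :: "('s \<Rightarrow> nat) \<Rightarrow> real^'m"
  assumes exp: "\<And>u. norm u < r1 \<Longrightarrow> ((\<lambda>\<alpha>. mon u \<alpha> *\<^sub>R c \<alpha>) has_sum h (a + u)) UNIV"
    and S1: "((\<lambda>\<alpha>. t1 ^ deg \<alpha> * norm (c \<alpha>)) has_sum S1) UNIV" and t1: "0 < t1" "t1 < r1"
    and t2: "0 < t2"
    and u: "norm u < min t1 (t1 * t2 / (S1 + 1))"
    and p_def: "p = (\<lambda>j \<alpha>. if \<alpha> = (\<lambda>_. 0) then 0 else c \<alpha> $ j)"
  shows "((\<lambda>\<alpha>. mon u \<alpha> * p j \<alpha>) has_sum (h (a + u) - h a) $ j) UNIV"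
    "((\<lambda>\<alpha>. \<bar>mon u \<alpha> * p j \<alpha>\<bar>) has_sum infsum (\<lambda>\<alpha>. \<bar>mon u \<alpha> * p j \<alpha>\<bar>) UNIV) UNIV"
    "infsum (\<lambda>\<alpha>. \<bar>mon u \<alpha> * p j \<alpha>\<bar>) UNIV \<le> t2"
    "\<bar>(h (a + u) - h a) $ j\<bar> \<le> t2"
proof -
  define Z :: "'s \<Rightarrow> nat" where "Z = (\<lambda>_. 0)"
  have S0: "0 \<le> S1" using S1 by (rule has_sum_nonneg) (use t1 in auto)
  have ha: "h a = c Z"
  proof -
    have "((\<lambda>\<alpha>. mon 0 \<alpha> *\<^sub>R c \<alpha>) has_sum h a) UNIV" using exp[of 0] t1 by simp
    moreover have "((\<lambda>\<alpha>. mon 0 \<alpha> *\<^sub>R c \<alpha>) has_sum c Z) UNIV"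
      by (rule has_sum_finite_neutralI[of "{Z}"]) (auto simp: mon_zero Z_def)
    ultimately show ?thesis using has_sum_unique by blast
  qed
  have un: "norm u < t1" using u by simp
  have hs: "((\<lambda>\<alpha>. (mon u \<alpha> *\<^sub>R c \<alpha>) $ j) has_sum h (a + u) $ j) UNIV"
    using has_sum_bounded_linear[OF bounded_linear_vec_nth exp[of u]] un t1 by simp
  have z: "((\<lambda>\<alpha>. - (if \<alpha> = Z then c Z $ j else 0)) has_sum - (c Z $ j)) UNIV"
    by (rule has_sum_finite_neutralI[of "{Z}"]) auto
  have "((\<lambda>\<alpha>. (mon u \<alpha> *\<^sub>R c \<alpha>) $ j + - (if \<alpha> = Z then c Z $ j else 0)) has_sum
          h (a + u) $ j + - (c Z $ j)) UNIV"
    by (intro has_sum_add hs z)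
  moreover have "(\<lambda>\<alpha>. (mon u \<alpha> *\<^sub>R c \<alpha>) $ j + - (if \<alpha> = Z then c Z $ j else 0)) = (\<lambda>\<alpha>. mon u \<alpha> * p j \<alpha>)"
  proof (rule ext)
    fix \<alpha>
    show "(mon u \<alpha> *\<^sub>R c \<alpha>) $ j + - (if \<alpha> = Z then c Z $ j else 0) = mon u \<alpha> * p j \<alpha>"
      by (cases "\<alpha> = Z") (simp_all add: p_def Z_def)
  qed
  ultimately show i: "((\<lambda>\<alpha>. mon u \<alpha> * p j \<alpha>) has_sum (h (a + u) - h a) $ j) UNIV"
    by (simp add: ha)
  define q where "q = norm u / t1"
  have q0: "0 \<le> q" using t1 by (simp add: q_def)
  have pw: "\<bar>mon u \<alpha> * p j \<alpha>\<bar> \<le> q * (t1 ^ deg \<alpha> * norm (c \<alpha>))" for \<alpha>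
  proof (cases "\<alpha> = Z")
    case True then show ?thesis using q0 t1 by (simp add: p_def Z_def)
  next
    case False
    then have "1 \<le> deg \<alpha>" unfolding Z_def by (rule deg_pos)
    then have m: "\<bar>mon u \<alpha>\<bar> \<le> q * t1 ^ deg \<alpha>"
      using mon_bound[of u t1 1 \<alpha>] un t1 by (simp add: q_def)
    have "\<bar>p j \<alpha>\<bar> \<le> norm (c \<alpha>)" using False by (simp add: p_def Z_def component_le_norm_cart)
    then have "\<bar>mon u \<alpha>\<bar> * \<bar>p j \<alpha>\<bar> \<le> (q * t1 ^ deg \<alpha>) * norm (c \<alpha>)"
      using m by (intro mult_mono) auto
    then show ?thesis by (simp add: abs_mult mult.assoc)
  qed
  have sb: "(\<lambda>\<alpha>. \<bar>mon u \<alpha> * p j \<alpha>\<bar>) summable_on UNIV"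
    by (rule sum_bound_nonneg[OF S1, where q = q]) (use pw t1 q0 in auto)
  then show "((\<lambda>\<alpha>. \<bar>mon u \<alpha> * p j \<alpha>\<bar>) has_sum infsum (\<lambda>\<alpha>. \<bar>mon u \<alpha> * p j \<alpha>\<bar>) UNIV) UNIV"
    by (simp add: summable_iff_has_sum_infsum)
  have "infsum (\<lambda>\<alpha>. \<bar>mon u \<alpha> * p j \<alpha>\<bar>) UNIV \<le> q * S1"
    by (rule sum_bound_nonneg[OF S1, where q = q]) (use pw t1 q0 in auto)
  also have "q * S1 \<le> t2"
  proof -
    have "norm u * S1 \<le> (t1 * t2 / (S1 + 1)) * S1" using u S0 by (intro mult_right_mono) auto
    also have "\<dots> = t1 * (t2 * (S1 / (S1 + 1)))" using S0 by (simp add: field_simps)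
    also have "\<dots> \<le> t1 * (t2 * 1)" using S0 t1 t2 by (intro mult_left_mono) auto
    finally show ?thesis using t1 by (simp add: q_def field_simps)
  qed
  finally show le: "infsum (\<lambda>\<alpha>. \<bar>mon u \<alpha> * p j \<alpha>\<bar>) UNIV \<le> t2" .
  have "norm ((h (a + u) - h a) $ j) \<le> infsum (\<lambda>\<alpha>. \<bar>mon u \<alpha> * p j \<alpha>\<bar>) UNIV"
    by (rule norm_has_sum_bound[OF _ i]) (use sb in \<open>simp add: summable_iff_has_sum_infsum\<close>)
  then show "\<bar>(h (a + u) - h a) $ j\<bar> \<le> t2" using le by simp
qed


lemma comp_local:
  fixes h :: "real^'s \<Rightarrow> real^'m" and c :: "('s \<Rightarrow> nat) \<Rightarrow> real^'m"
    and f :: "real^'m \<Rightarrow> real^'k" and d :: "('m \<Rightarrow> nat) \<Rightarrow> real^'k"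
  assumes exph: "\<And>u. norm u < r1 \<Longrightarrow> ((\<lambda>\<alpha>. mon u \<alpha> *\<^sub>R c \<alpha>) has_sum h (a + u)) UNIV"
    and S1: "((\<lambda>\<alpha>. t1 ^ deg \<alpha> * norm (c \<alpha>)) has_sum S1) UNIV" and t1: "0 < t1" "t1 < r1"
    and expf: "\<And>v. norm v < r2 \<Longrightarrow> ((\<lambda>\<beta>. mon v \<beta> *\<^sub>R d \<beta>) has_sum f (h a + v)) UNIV"
    and S2: "((\<lambda>\<beta>. t2 ^ deg \<beta> * norm (d \<beta>)) has_sum S2) UNIV" and t2: "0 < t2"
    and t2r: "real CARD('m) * t2 < r2"
  shows "\<exists>\<delta>>0. \<exists>E. \<forall>u. norm u < \<delta> \<longrightarrow> ((\<lambda>\<gamma>. mon u \<gamma> *\<^sub>R E \<gamma>) has_sum f (h (a + u))) UNIV"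
proof -
  define p where "p = (\<lambda>(j::'m) (\<alpha>::'s\<Rightarrow>nat). if \<alpha> = (\<lambda>_. 0) then 0 else c \<alpha> $ j)"
  define \<delta> where "\<delta> = min t1 (t1 * t2 / (S1 + 1))"
  have S10: "0 \<le> S1" using S1 by (rule has_sum_nonneg) (use t1 in auto)
  have \<delta>0: "0 < \<delta>" using t1 t2 S10 by (simp add: \<delta>_def)
  have IB1: "((\<lambda>\<alpha>. mon u \<alpha> * p j \<alpha>) has_sum (h (a + u) - h a) $ j) UNIV" if "norm u < \<delta>" for u j
    using inner_bounds(1)[OF exph S1 t1 t2 that[unfolded \<delta>_def] p_def] .
  have IB2: "((\<lambda>\<alpha>. \<bar>mon u \<alpha> * p j \<alpha>\<bar>) has_sum infsum (\<lambda>\<alpha>. \<bar>mon u \<alpha> * p j \<alpha>\<bar>) UNIV) UNIV" if "norm u < \<delta>" for u j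
    using inner_bounds(2)[OF exph S1 t1 t2 that[unfolded \<delta>_def] p_def] .
  have IB3: "infsum (\<lambda>\<alpha>. \<bar>mon u \<alpha> * p j \<alpha>\<bar>) UNIV \<le> t2" if "norm u < \<delta>" for u j
    using inner_bounds(3)[OF exph S1 t1 t2 that[unfolded \<delta>_def] p_def] .
  have IB4: "\<bar>(h (a + u) - h a) $ j\<bar> \<le> t2" if "norm u < \<delta>" for u j
    using inner_bounds(4)[OF exph S1 t1 t2 that[unfolded \<delta>_def] p_def] .
  define m where "m = (\<lambda>u j. infsum (\<lambda>\<alpha>. \<bar>mon u \<alpha> * p j \<alpha>\<bar>) UNIV)"
  define I where "I = (SIGMA \<beta>:(UNIV::('m\<Rightarrow>nat) set). PiE (Dset \<beta>) (\<lambda>_. (UNIV::('s\<Rightarrow>nat) set)))"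
  define T where "T = (\<lambda>u (z::('m\<Rightarrow>nat) \<times> ('m \<times> nat \<Rightarrow> 's \<Rightarrow> nat)).
     (\<Prod>jk\<in>Dset (fst z). mon u (snd z jk) * p (fst jk) (snd z jk)) *\<^sub>R d (fst z))"
  define \<sigma> where "\<sigma> = (\<lambda>z::('m\<Rightarrow>nat) \<times> ('m \<times> nat \<Rightarrow> 's \<Rightarrow> nat). (\<lambda>i. \<Sum>jk\<in>Dset (fst z). snd z jk i))"
  define Q where "Q = (\<lambda>z::('m\<Rightarrow>nat) \<times> ('m \<times> nat \<Rightarrow> 's \<Rightarrow> nat).
     (\<Prod>jk\<in>Dset (fst z). p (fst jk) (snd z jk)) *\<^sub>R d (fst z))"
  have TQ: "T u z = mon u (\<sigma> z) *\<^sub>R Q z" for u z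
    unfolding T_def Q_def \<sigma>_def by (simp add: prod.distrib mon_prod)
  have claimB: "(T u has_sum f (h (a + u))) I \<and> (\<lambda>z. norm (T u z)) summable_on I"
    if u: "norm u < \<delta>" for u
  proof -
    define y where "y = h (a + u) - h a"
    have yj: "\<bar>y $ j\<bar> \<le> t2" for j using IB4[OF u] by (simp add: y_def)
    have ny: "norm y < r2"
    proof -
      have "norm y \<le> (\<Sum>j\<in>UNIV. \<bar>y $ j\<bar>)" by (rule norm_le_l1_cart)
      also have "\<dots> \<le> (\<Sum>j\<in>(UNIV::'m set). t2)" by (rule sum_mono) (rule yj)
      also have "\<dots> = real CARD('m) * t2" by simp
      finally show ?thesis using t2r by linarith
    qed
    have m0: "0 \<le> m u j" for j unfolding m_def by (rule infsum_nonneg) auto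
    have mle: "m u j \<le> t2" for j unfolding m_def using IB3[OF u] .
    have fib: "((\<lambda>\<tau>. T u (\<beta>, \<tau>)) has_sum mon y \<beta> *\<^sub>R d \<beta>) (PiE (Dset \<beta>) (\<lambda>_. UNIV))
          \<and> ((\<lambda>\<tau>. norm (T u (\<beta>, \<tau>))) has_sum (\<Prod>j\<in>UNIV. m u j ^ \<beta> j) * norm (d \<beta>)) (PiE (Dset \<beta>) (\<lambda>_. UNIV))"
      for \<beta>
    proof -
      note PP = prod_PiE_abs[where A="Dset \<beta>" and B="\<lambda>_. UNIV"
          and f="\<lambda>jk \<alpha>. mon u \<alpha> * p (fst jk) \<alpha>" and s="\<lambda>jk. y $ fst jk" and m="\<lambda>jk. m u (fst jk)"]
      have P1: "((\<lambda>\<tau>. \<Prod>jk\<in>Dset \<beta>. mon u (\<tau> jk) * p (fst jk) (\<tau> jk)) has_sum (\<Prod>jk\<in>Dset \<beta>. y $ fst jk))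
                 (PiE (Dset \<beta>) (\<lambda>_. UNIV))"
        by (rule PP(1)) (use IB1[OF u] IB2[OF u] in \<open>auto simp: y_def m_def\<close>)
      have P2: "((\<lambda>\<tau>. \<bar>\<Prod>jk\<in>Dset \<beta>. mon u (\<tau> jk) * p (fst jk) (\<tau> jk)\<bar>) has_sum (\<Prod>jk\<in>Dset \<beta>. m u (fst jk)))
                 (PiE (Dset \<beta>) (\<lambda>_. UNIV))"
        by (rule PP(2)) (use IB1[OF u] IB2[OF u] in \<open>auto simp: y_def m_def\<close>)
      have e1: "(\<Prod>jk\<in>Dset \<beta>. y $ fst jk) = mon y \<beta>"
        unfolding mon_def by (rule prod_Dset)
      have e2: "(\<Prod>jk\<in>Dset \<beta>. m u (fst jk)) = (\<Prod>j\<in>UNIV. m u j ^ \<beta> j)"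
        by (rule prod_Dset)
      show ?thesis
      proof
        show "((\<lambda>\<tau>. T u (\<beta>, \<tau>)) has_sum mon y \<beta> *\<^sub>R d \<beta>) (PiE (Dset \<beta>) (\<lambda>_. UNIV))"
          using has_sum_bounded_linear[OF bounded_linear_scaleR_left P1, of "d \<beta>"]
          by (simp add: T_def e1)
        show "((\<lambda>\<tau>. norm (T u (\<beta>, \<tau>))) has_sum (\<Prod>j\<in>UNIV. m u j ^ \<beta> j) * norm (d \<beta>)) (PiE (Dset \<beta>) (\<lambda>_. UNIV))"
          using has_sum_cmult_left[OF P2, of "norm (d \<beta>)"] by (simp add: T_def e2)
      qed
    qed
    have gs: "(\<lambda>\<beta>. (\<Prod>j\<in>UNIV. m u j ^ \<beta> j) * norm (d \<beta>)) summable_on UNIV"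
    proof (rule summable_on_comparison_test[OF has_sum_imp_summable[OF S2]])
      fix \<beta> :: "'m \<Rightarrow> nat"
      have "(\<Prod>j\<in>UNIV. m u j ^ \<beta> j) \<le> (\<Prod>j\<in>UNIV. t2 ^ \<beta> j)"
        by (intro prod_mono conjI power_mono zero_le_power m0 mle)
      also have "\<dots> = t2 ^ deg \<beta>" by (simp add: deg_def power_sum)
      finally show "(\<Prod>j\<in>UNIV. m u j ^ \<beta> j) * norm (d \<beta>) \<le> t2 ^ deg \<beta> * norm (d \<beta>)"
        by (rule mult_right_mono) simp
      show "0 \<le> (\<Prod>j\<in>UNIV. m u j ^ \<beta> j) * norm (d \<beta>)"
        by (intro mult_nonneg_nonneg prod_nonneg zero_le_power m0) simp
    qed
    have ns: "(\<lambda>z. norm (T u z)) summable_on I"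
      unfolding I_def
      by (rule summable_on_SigmaI[where f="\<lambda>z. norm (T u z)", OF conjunct2[OF fib] gs]) simp
    have "T u summable_on I" by (rule abs_summable_summable[OF ns])
    moreover have "((\<lambda>\<beta>. mon y \<beta> *\<^sub>R d \<beta>) has_sum f (h (a + u))) UNIV"
      using expf[OF ny] by (simp add: y_def)
    ultimately have "(T u has_sum f (h (a + u))) I"
      unfolding I_def by (intro has_sum_SigmaI[OF conjunct1[OF fib]]) auto
    with ns show ?thesis by simp
  qed
  define G where "G = (\<lambda>\<gamma>. {z\<in>I. \<sigma> z = \<gamma>})"
  define u0 :: "real^'s" where "u0 = (\<chi> i. \<delta> / (2 * real CARD('s)))"
  have u0n: "norm u0 < \<delta>"
  proof -
    have "norm u0 \<le> (\<Sum>i\<in>UNIV. \<bar>u0 $ i\<bar>)" by (rule norm_le_l1_cart)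
    also have "\<dots> = \<delta> / 2" using \<delta>0 by (simp add: u0_def)
    finally show ?thesis using \<delta>0 by linarith
  qed
  have u0pos: "mon u0 \<gamma> > 0" for \<gamma>
    unfolding mon_def using \<delta>0 by (intro prod_pos) (simp add: u0_def)
  have T0: "T u0 summable_on I" using claimB[OF u0n] by (auto intro: has_sum_imp_summable)
  have Qs: "Q summable_on G \<gamma>" for \<gamma>
  proof -
    have "T u0 summable_on G \<gamma>" by (rule summable_on_subset_banach[OF T0]) (auto simp: G_def)
    then have "((\<lambda>z. inverse (mon u0 \<gamma>) *\<^sub>R T u0 z) has_sum inverse (mon u0 \<gamma>) *\<^sub>R infsum (T u0) (G \<gamma>)) (G \<gamma>)"
      by (intro has_sum_scaleR) (simp add: summable_iff_has_sum_infsum)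
    moreover have "inverse (mon u0 \<gamma>) *\<^sub>R T u0 z = Q z" if "z \<in> G \<gamma>" for z
      using that u0pos[of \<gamma>] by (simp add: TQ G_def)
    ultimately have "(Q has_sum inverse (mon u0 \<gamma>) *\<^sub>R infsum (T u0) (G \<gamma>)) (G \<gamma>)"
      using has_sum_cong by (metis (no_types, lifting))
    then show ?thesis by (rule has_sum_imp_summable)
  qed
  define E where "E = (\<lambda>\<gamma>. infsum Q (G \<gamma>))"
  have "((\<lambda>\<gamma>. mon u \<gamma> *\<^sub>R E \<gamma>) has_sum f (h (a + u))) UNIV" if u: "norm u < \<delta>" for u
  proof -
    define \<phi> where "\<phi> = (\<lambda>z. (\<sigma> z, z))"
    have inj: "inj_on \<phi> I" by (auto simp: inj_on_def \<phi>_def)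
    have img: "\<phi> ` I = Sigma UNIV G" by (auto simp: \<phi>_def G_def image_iff)
    have "((\<lambda>p. T u (snd p)) has_sum f (h (a + u))) (\<phi> ` I)"
      using has_sum_reindex[OF inj, of "\<lambda>p. T u (snd p)"] claimB[OF u]
      by (simp add: o_def \<phi>_def)
    then have "((\<lambda>p. T u (snd p)) has_sum f (h (a + u))) (Sigma UNIV G)"
      by (simp only: img)
    moreover have "((\<lambda>z. T u (snd (\<gamma>, z))) has_sum mon u \<gamma> *\<^sub>R E \<gamma>) (G \<gamma>)" for \<gamma>
    proof -
      have "((\<lambda>z. mon u \<gamma> *\<^sub>R Q z) has_sum mon u \<gamma> *\<^sub>R E \<gamma>) (G \<gamma>)"
        unfolding E_def by (intro has_sum_scaleR) (use Qs in \<open>simp add: summable_iff_has_sum_infsum\<close>)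
      moreover have "T u z = mon u \<gamma> *\<^sub>R Q z" if "z \<in> G \<gamma>" for z
        using that by (simp add: TQ G_def)
      ultimately have "(T u has_sum mon u \<gamma> *\<^sub>R E \<gamma>) (G \<gamma>)"
        using has_sum_cong[of "G \<gamma>" "T u" "\<lambda>z. mon u \<gamma> *\<^sub>R Q z"] by blast
      then show ?thesis by simp
    qed
    ultimately show ?thesis by (rule has_sum_SigmaD)
  qed
  then show ?thesis using \<delta>0 by blast
qed


lemma analytic_comp:
  fixes h :: "real^'s \<Rightarrow> real^'m" and f :: "real^'m \<Rightarrow> real^'k"
  assumes ah: "real_analytic h" and af: "real_analytic f"
  shows "real_analytic (f \<circ> h)"
  unfolding real_analytic_def
proof
  fix a :: "real^'s"
  obtain r1 c t1 S1 where h: "0 < r1" "0 < t1" "t1 < r1" "real CARD('s) * t1 < r1"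
    "\<And>u. norm u < r1 \<Longrightarrow> ((\<lambda>\<alpha>. mon u \<alpha> *\<^sub>R c \<alpha>) has_sum h (a + u)) UNIV"
    "((\<lambda>\<alpha>. t1 ^ deg \<alpha> * norm (c \<alpha>)) has_sum S1) UNIV"
    by (rule analytic_at[OF ah, of a]) blast
  obtain r2 d t2 S2 where f: "0 < r2" "0 < t2" "t2 < r2" "real CARD('m) * t2 < r2"
    "\<And>v. norm v < r2 \<Longrightarrow> ((\<lambda>\<beta>. mon v \<beta> *\<^sub>R d \<beta>) has_sum f (h a + v)) UNIV"
    "((\<lambda>\<beta>. t2 ^ deg \<beta> * norm (d \<beta>)) has_sum S2) UNIV"
    by (rule analytic_at[OF af, of "h a"]) blast
  obtain \<delta> E where \<delta>: "\<delta> > 0" and E: "\<And>u. norm u < \<delta> \<Longrightarrow> ((\<lambda>\<gamma>. mon u \<gamma> *\<^sub>R E \<gamma>) has_sum f (h (a + u))) UNIV"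
    using comp_local[OF h(5) h(6) h(2) h(3) f(5) f(6) f(2) f(4)] by blast
  show "\<exists>r>0. \<exists>c. \<forall>x\<in>ball a r. ((\<lambda>\<alpha>. (\<Prod>i\<in>UNIV. (x $ i - a $ i) ^ \<alpha> i) *\<^sub>R c \<alpha>) has_sum (f \<circ> h) x) UNIV"
  proof (intro exI conjI ballI)
    fix x assume "x \<in> ball a \<delta>"
    then have n: "norm (x - a) < \<delta>" by (simp add: dist_norm norm_minus_commute)
    show "((\<lambda>\<alpha>. (\<Prod>i\<in>UNIV. (x $ i - a $ i) ^ \<alpha> i) *\<^sub>R E \<alpha>) has_sum (f \<circ> h) x) UNIV"
      using E[OF n] by (simp add: mon_def)
  qed (rule \<delta>)
qed

lemma analytic_has_derivative:
  fixes h :: "real^'a \<Rightarrow> real^'b"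
  assumes "real_analytic h"
  shows "\<exists>D. (h has_derivative D) (at a)"
proof -
  obtain r c t S where h: "0 < r" "0 < t" "t < r" "real CARD('a) * t < r"
    "\<And>u. norm u < r \<Longrightarrow> ((\<lambda>\<alpha>. mon u \<alpha> *\<^sub>R c \<alpha>) has_sum h (a + u)) UNIV"
    "((\<lambda>\<alpha>. t ^ deg \<alpha> * norm (c \<alpha>)) has_sum S) UNIV"
    by (rule analytic_at[OF assms, of a]) blast
  show ?thesis using analytic_deriv[OF h(5) h(6) h(2) h(3)] by blast
qed

lemma det_TT_nz:
  fixes A :: "real^'n^'p"
  shows "det (transpose A ** A) \<noteq> 0 \<longleftrightarrow> (\<forall>x. A *v x = 0 \<longrightarrow> x = 0)"
proof
  assume "det (transpose A ** A) \<noteq> 0"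
  then have "invertible (transpose A ** A)" by (simp add: invertible_det_nz)
  then obtain B where B: "B ** (transpose A ** A) = mat 1" using invertible_left_inverse by blast
  show "\<forall>x. A *v x = 0 \<longrightarrow> x = 0"
  proof (intro allI impI)
    fix x assume "A *v x = 0"
    then have "(transpose A ** A) *v x = 0" by (simp add: matrix_vector_mul_assoc[symmetric])
    then have "B *v ((transpose A ** A) *v x) = 0" by simp
    then show "x = 0" by (simp add: matrix_vector_mul_assoc B)
  qed
next
  assume k: "\<forall>x. A *v x = 0 \<longrightarrow> x = 0"
  have "\<forall>x. (transpose A ** A) *v x = 0 \<longrightarrow> x = 0"
  proof (intro allI impI)
    fix x assume a: "(transpose A ** A) *v x = 0"
    have "(A *v x) \<bullet> (A *v x) = ((A *v x) v* A) \<bullet> x" by (simp add: dot_lmul_matrix)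
    also have "\<dots> = x \<bullet> (transpose A *v (A *v x))" by (simp add: transpose_matrix_vector inner_commute)
    also have "\<dots> = 0" using a by (simp add: matrix_vector_mul_assoc)
    finally have "A *v x = 0" by simp
    then show "x = 0" using k by blast
  qed
  then obtain B where "B ** (transpose A ** A) = mat 1" using matrix_left_invertible_ker by blast
  then have "invertible (transpose A ** A)" using invertible_left_inverse by blast
  then show "det (transpose A ** A) \<noteq> 0" by (simp add: invertible_det_nz)
qed

lemma jac_comp:
  fixes h :: "real^'s \<Rightarrow> real^'m" and f :: "real^'m \<Rightarrow> real^'k"
  assumes dh: "(h has_derivative Dh) (at v)" and df: "(f has_derivative Df) (at (h v))"
    and c1: "CARD('s) \<le> CARD('m)" and c2: "CARD('m) \<le> CARD('k)"
    and jh: "Jac h v \<noteq> 0" and jf: "Jac f (h v) > 0"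
  shows "Jac (f \<circ> h) v \<noteq> 0"
proof -
  define P where "P = matrix Dh"
  define Q where "Q = matrix Df"
  have DP: "Dmat h v = P" unfolding Dmat_def P_def using frechet_derivative_at[OF dh] by simp
  have DQ: "Dmat f (h v) = Q" unfolding Dmat_def Q_def using frechet_derivative_at[OF df] by simp
  have dfh: "((f \<circ> h) has_derivative (Df \<circ> Dh)) (at v)" by (rule diff_chain_at[OF dh df])
  have "Dmat (f \<circ> h) v = matrix (Df \<circ> Dh)" unfolding Dmat_def using frechet_derivative_at[OF dfh] by simp
  also have "\<dots> = Q ** P" unfolding P_def Q_def
    by (rule matrix_compose[OF has_derivative_linear[OF dh] has_derivative_linear[OF df]])
  finally have DQP: "Dmat (f \<circ> h) v = Q ** P" .
  have "det (transpose P ** P) \<noteq> 0" using jh c1 by (auto simp: Jac_def DP)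
  then have kP: "\<forall>x. P *v x = 0 \<longrightarrow> x = 0" by (simp add: det_TT_nz)
  have "det (transpose Q ** Q) \<noteq> 0" using jf c2 by (auto simp: Jac_def DQ)
  then have kQ: "\<forall>x. Q *v x = 0 \<longrightarrow> x = 0" by (simp add: det_TT_nz)
  have "\<forall>x. (Q ** P) *v x = 0 \<longrightarrow> x = 0"
    using kP kQ by (simp add: matrix_vector_mul_assoc[symmetric])
  then have "det (transpose (Q ** P) ** (Q ** P)) \<noteq> 0" by (simp add: det_TT_nz)
  moreover have "CARD('s) \<le> CARD('k)" using c1 c2 by simp
  ultimately show ?thesis by (simp add: Jac_def DQP)
qed

theorem lemma11:
  fixes M :: "'a measure" and x :: "'a \<Rightarrow> real^'m" and f :: "real^'m \<Rightarrow> real^'k"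
  assumes "prob_space M"
    and "x \<in> borel_measurable M"
    and "s_analytic TYPE('s::finite) (distr M borel x)"
    and "CARD('m) \<le> CARD('k)"
    and "real_analytic f"
    and "\<forall>v. Jac f v > 0"
  shows "s_analytic TYPE('s::finite) (distr M borel (\<lambda>\<omega>. f (x \<omega>)))"
proof -
  have cont: "continuous_on UNIV f"
  proof (rule continuous_at_imp_continuous_on, intro ballI)
    fix y :: "real^'m"
    obtain D where "(f has_derivative D) (at y)" using analytic_has_derivative[OF assms(5)] by blast
    then show "isCont f y" by (rule has_derivative_continuous)
  qed
  have fm: "f \<in> borel_measurable borel" by (rule borel_measurable_continuous_onI[OF cont])
  have fxm: "(\<lambda>\<omega>. f (x \<omega>)) \<in> borel_measurable M"
    using measurable_comp[OF assms(2) fm] by (simp add: o_def)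
  have sa: "CARD('s) \<le> CARD('m)"
    "\<And>U. U \<in> sets borel \<Longrightarrow> emeasure (distr M borel x) U > 0 \<Longrightarrow>
        (\<exists>(A :: (real^'s) set) (h :: real^'s \<Rightarrow> real^'m).
            A \<in> sets borel \<and> emeasure lborel A > 0 \<and>
            real_analytic h \<and> (\<exists>v. Jac h v \<noteq> 0) \<and> h ` A \<subseteq> U)"
    using assms(3) unfolding s_analytic_def by blast+
  show ?thesis
    unfolding s_analytic_def
  proof (intro conjI ballI impI)
    show "CARD('s) \<le> CARD('k)" using sa(1) assms(4) by simp
    fix U :: "(real^'k) set"
    assume U: "U \<in> sets borel" and pos: "emeasure (distr M borel (\<lambda>\<omega>. f (x \<omega>))) U > 0"
    have fU: "f -` U \<in> sets borel"
      using measurable_sets[OF fm U] by simp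
    have "emeasure (distr M borel (\<lambda>\<omega>. f (x \<omega>))) U = emeasure M ((\<lambda>\<omega>. f (x \<omega>)) -` U \<inter> space M)"
      by (rule emeasure_distr[OF fxm U])
    also have "\<dots> = emeasure M (x -` (f -` U) \<inter> space M)" by (simp add: vimage_def)
    also have "\<dots> = emeasure (distr M borel x) (f -` U)"
      by (rule emeasure_distr[OF assms(2) fU, symmetric])
    finally have "emeasure (distr M borel x) (f -` U) > 0" using pos by simp
    then obtain A and h :: "real^'s \<Rightarrow> real^'m" and v where A: "A \<in> sets borel" "emeasure lborel A > 0"
      and ha: "real_analytic h" and v: "Jac h v \<noteq> 0" and hA: "h ` A \<subseteq> f -` U"
      using sa(2)[OF fU] by blast
    show "\<exists>(A :: (real^'s) set) (h :: real^'s \<Rightarrow> real^'k).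
            A \<in> sets borel \<and> emeasure lborel A > 0 \<and>
            real_analytic h \<and> (\<exists>v. Jac h v \<noteq> 0) \<and> h ` A \<subseteq> U"
    proof (intro exI conjI)
      show "A \<in> sets borel" "emeasure lborel A > 0" by (rule A(1), rule A(2))
      show "real_analytic (f \<circ> h)" by (rule analytic_comp[OF ha assms(5)])
      show "(f \<circ> h) ` A \<subseteq> U" using hA by auto
      obtain Dh where dh: "(h has_derivative Dh) (at v)" using analytic_has_derivative[OF ha] by blast
      obtain Df where df: "(f has_derivative Df) (at (h v))" using analytic_has_derivative[OF assms(5)] by blast
      show "Jac (f \<circ> h) v \<noteq> 0"
        using jac_comp[OF dh df sa(1) assms(4) v] assms(6) by blast
    qed
  qed
qed

end
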